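(* Let $\Omega\subseteq\mathbb{R}^d$ be a convex body contained in the unit ball that contains a ball centered at $0$ of radius equal to a positive constant depending only on $d$, and let $f_0(x):=\|x\|^2$. There exists a positive constant $C_d$ depending only on $d$ such that for every integer $k\ge1$ there exist $m\le C_dk$ $d$-simplices $\Delta_1,\dots,\Delta_m\subseteq\Omega$ with disjoint interiors and a convex function $\tilde f_k$ on $\Omega$ such that: (1) $(1-C_dk^{-1/d})\Omega\subseteq\bigcup_{i=1}^m\Delta_i\subseteq\Omega$; (2) $\tilde f_k$ is affine on each $\Delta_i$; (3) $\sup_{x\in\Omega}|f_0(x)-\tilde f_k(x)|\le C_dk^{-2/d}$; (4) $\tilde f_k\in\mathcal{C}^{C_d}_{C_d}(\Omega)$.
   Context: $\mathcal{C}_L^L(\Omega)$ is the class of convex $L$-Lipschitz functions on $\Omega$ bounded in absolute value by $L$. For $\lambda>0$, $\lambda\Omega=\{\lambda x:x\in\Omega\}$. *)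

theory Defs
  imports "HOL-Analysis.Analysis"
begin

text \<open>The class C_L^L(Omega): convex, L-Lipschitz functions on Omega bounded in
  absolute value by L.\<close>
definition convex_lip_bdd :: "real \<Rightarrow> 'a::euclidean_space set \<Rightarrow> ('a \<Rightarrow> real) \<Rightarrow> bool" where
  "convex_lip_bdd L \<Omega> f \<longleftrightarrow>
     convex_on \<Omega> f \<and> L-lipschitz_on \<Omega> f \<and> (\<forall>x\<in>\<Omega>. \<bar>f x\<bar> \<le> L)"

definition convex_body :: "'a::euclidean_space set \<Rightarrow> bool" where
  "convex_body \<Omega> \<longleftrightarrow> compact \<Omega> \<and> convex \<Omega> \<and> interior \<Omega> \<noteq> {}"

end

theory Submission
  imports Defs "HOL-Combinatorics.Multiset_Permutations"
begin

definition Lf :: "real \<Rightarrow> int \<Rightarrow> real \<Rightarrow> real" where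
  "Lf h n t = (2 * of_int n + 1) * h * t - of_int n * (of_int n + 1) * h\<^sup>2"

definition pf :: "real \<Rightarrow> real \<Rightarrow> real" where
  "pf h t = Lf h \<lfloor>t / h\<rfloor> t"

lemma Lf_diff: "Lf h n t - Lf h m t = (of_int n - of_int m) * h * (2 * t - h * (of_int n + of_int m + 1))"
  unfolding Lf_def by (simp add: algebra_simps power2_eq_square)

lemma Lf_le:
  assumes h: "h > 0" and t: "of_int n * h \<le> t" "t \<le> (of_int n + 1) * h"
  shows "Lf h m t \<le> Lf h n t"
proof -
  have "0 \<le> (of_int n - of_int m) * h * (2 * t - h * (of_int n + of_int m + 1))"
  proof (cases "m < n")
    case True
    hence "real_of_int m + 1 \<le> of_int n" by linarith
    hence "h * (of_int n + of_int m + 1) \<le> h * (2 * of_int n)" using h by (intro mult_left_mono) auto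
    hence "0 \<le> 2 * t - h * (of_int n + of_int m + 1)" using t(1) by (simp add: algebra_simps)
    moreover have "0 \<le> (of_int n - of_int m) * h" using True h by simp
    ultimately show ?thesis by simp
  next
    case False
    hence "real_of_int n + 1 \<le> of_int m \<or> m = n" by linarith
    thus ?thesis
    proof
      assume a: "real_of_int n + 1 \<le> of_int m"
      hence "h * (2 * (of_int n + 1)) \<le> h * (of_int n + of_int m + 1)" using h by (intro mult_left_mono) auto
      hence "2 * t - h * (of_int n + of_int m + 1) \<le> 0" using t(2) by (simp add: algebra_simps)
      moreover have "(of_int n - of_int m) * h \<le> 0" using a h by (simp add: mult_nonpos_nonneg)
      ultimately show ?thesis by (simp add: mult_nonpos_nonpos)
    qed simp
  qed
  thus ?thesis using Lf_diff[of h n t m] by linarith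
qed

lemma floor_div_bounds:
  fixes h t :: real
  assumes "h > 0"
  shows "of_int \<lfloor>t/h\<rfloor> * h \<le> t" "t \<le> (of_int \<lfloor>t/h\<rfloor> + 1) * h"
  using floor_divide_lower[OF assms, of t] floor_divide_upper[OF assms, of t] by auto

lemma pf_ge: "h > 0 \<Longrightarrow> Lf h m t \<le> pf h t"
  unfolding pf_def using Lf_le floor_div_bounds by blast

lemma pf_eq:
  assumes "h > 0" "of_int n * h \<le> t" "t \<le> (of_int n + 1) * h"
  shows "pf h t = Lf h n t"
  using pf_ge[OF assms(1), of n t] Lf_le[OF assms, of "\<lfloor>t/h\<rfloor>"] unfolding pf_def by linarith

lemma pf_err:
  assumes h: "h > 0"
  shows "0 \<le> pf h t - t\<^sup>2" "pf h t - t\<^sup>2 \<le> h\<^sup>2 / 4"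
proof -
  define n where "n = real_of_int \<lfloor>t/h\<rfloor>"
  have b: "n * h \<le> t" "t \<le> (n + 1) * h" using floor_div_bounds[OF h, of t] by (auto simp: n_def)
  have e: "pf h t - t\<^sup>2 = (t - n * h) * ((n + 1) * h - t)"
    unfolding pf_def Lf_def n_def[symmetric] by (simp add: algebra_simps power2_eq_square)
  show "0 \<le> pf h t - t\<^sup>2" unfolding e using b by simp
  have "(t - n * h) * ((n + 1) * h - t) \<le> h\<^sup>2 / 4"
  proof -
    have "0 \<le> ((t - n * h) - ((n + 1) * h - t))\<^sup>2" by simp
    thus ?thesis by (simp add: algebra_simps power2_eq_square)
  qed
  thus "pf h t - t\<^sup>2 \<le> h\<^sup>2 / 4" using e by simp
qed

lemma Lf_affine: "Lf h n (a * x + b * y) = a * Lf h n x + b * Lf h n y" if "a + b = 1"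
proof -
  have "Lf h n (a * x + b * y) = a * Lf h n x + b * Lf h n y - (1 - a - b) * (of_int n * (of_int n + 1) * h\<^sup>2)"
    unfolding Lf_def by (simp add: algebra_simps)
  thus ?thesis using that by simp
qed

lemma pf_convex: "h > 0 \<Longrightarrow> convex_on UNIV (pf h)"
proof (rule convex_onI)
  show "convex (UNIV::real set)" by simp
next
  fix t x y :: real assume h: "h > 0" and t: "0 < t" "t < 1"
  define n where "n = \<lfloor>((1 - t) * x + t * y) / h\<rfloor>"
  have "pf h ((1 - t) * x + t * y) = Lf h n ((1 - t) * x + t * y)" unfolding pf_def n_def ..
  also have "\<dots> = (1 - t) * Lf h n x + t * Lf h n y" by (rule Lf_affine) simp
  also have "\<dots> \<le> (1 - t) * pf h x + t * pf h y"
    using t pf_ge[OF h] by (intro add_mono mult_left_mono) auto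
  finally show "pf h ((1 - t) *\<^sub>R x + t *\<^sub>R y) \<le> (1 - t) * pf h x + t * pf h y" by simp
qed

lemma Lf_slope: "Lf h n x - Lf h n y = (2 * of_int n + 1) * h * (x - y)"
  unfolding Lf_def by (simp add: algebra_simps)

lemma slope_bound:
  fixes h x :: real
  assumes h: "0 < h" "h \<le> 1" and x: "\<bar>x\<bar> \<le> 1"
  shows "\<bar>(2 * of_int \<lfloor>x/h\<rfloor> + 1) * h\<bar> \<le> 5"
proof -
  define n where "n = real_of_int \<lfloor>x/h\<rfloor>"
  have b: "n * h \<le> x" "x \<le> (n + 1) * h" using floor_div_bounds[OF h(1), of x] by (auto simp: n_def)
  have "(2 * n + 1) * h = 2 * (n * h) + h" by (simp add: algebra_simps)
  moreover have "n * h \<le> 1" "-2 \<le> n * h" using b x h by (auto simp: algebra_simps)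
  ultimately show ?thesis unfolding n_def[symmetric] using h by (simp add: abs_le_iff)
qed

lemma pf_lip:
  assumes h: "0 < h" "h \<le> 1" and x: "\<bar>x\<bar> \<le> 1" and y: "\<bar>y\<bar> \<le> 1"
  shows "\<bar>pf h x - pf h y\<bar> \<le> 5 * \<bar>x - y\<bar>"
proof -
  have 1: "pf h x - pf h y \<le> (2 * of_int \<lfloor>x/h\<rfloor> + 1) * h * (x - y)"
    using pf_ge[OF h(1), of "\<lfloor>x/h\<rfloor>" y] Lf_slope[of h "\<lfloor>x/h\<rfloor>" x y] unfolding pf_def by linarith
  have 2: "pf h y - pf h x \<le> (2 * of_int \<lfloor>y/h\<rfloor> + 1) * h * (y - x)"
    using pf_ge[OF h(1), of "\<lfloor>y/h\<rfloor>" x] Lf_slope[of h "\<lfloor>y/h\<rfloor>" y x] unfolding pf_def by linarith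
  have "(2 * of_int \<lfloor>x/h\<rfloor> + 1) * h * (x - y) \<le> 5 * \<bar>x - y\<bar>"
  proof -
    have "(2 * of_int \<lfloor>x/h\<rfloor> + 1) * h * (x - y) \<le> \<bar>(2 * of_int \<lfloor>x/h\<rfloor> + 1) * h\<bar> * \<bar>x - y\<bar>"
      by (metis abs_ge_self abs_mult)
    also have "\<dots> \<le> 5 * \<bar>x - y\<bar>" using slope_bound[OF h x] by (intro mult_right_mono) auto
    finally show ?thesis .
  qed
  moreover have "(2 * of_int \<lfloor>y/h\<rfloor> + 1) * h * (y - x) \<le> 5 * \<bar>x - y\<bar>"
  proof -
    have "(2 * of_int \<lfloor>y/h\<rfloor> + 1) * h * (y - x) \<le> \<bar>(2 * of_int \<lfloor>y/h\<rfloor> + 1) * h\<bar> * \<bar>y - x\<bar>"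
      by (metis abs_ge_self abs_mult)
    also have "\<dots> \<le> 5 * \<bar>x - y\<bar>" using slope_bound[OF h y] by (simp add: abs_minus_commute mult_right_mono)
    finally show ?thesis .
  qed
  ultimately show ?thesis using 1 2 by linarith
qed

definition wv :: "real \<Rightarrow> 'a::euclidean_space \<Rightarrow> 'a list \<Rightarrow> nat \<Rightarrow> 'a" where
  "wv h z l k = h *\<^sub>R (z + sum_list (take k l))"

definition KS :: "real \<Rightarrow> 'a::euclidean_space \<Rightarrow> 'a list \<Rightarrow> 'a set" where
  "KS h z l = convex hull (wv h z l ` {..length l})"

lemma sum_take_inner:
  fixes l :: "'a::euclidean_space list"
  assumes "distinct l" "set l \<subseteq> Basis" "b \<in> Basis"
  shows "sum_list (take k l) \<bullet> b = (if b \<in> set (take k l) then 1 else 0)"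
proof -
  have d: "distinct (take k l)" using assms by simp
  have "sum_list (take k l) = sum id (set (take k l))"
    using sum_list_distinct_conv_sum_set[OF d, of id] by simp
  hence "sum_list (take k l) \<bullet> b = (\<Sum>c\<in>set (take k l). c \<bullet> b)"
    by (simp add: inner_sum_left)
  also have "\<dots> = (\<Sum>c\<in>set (take k l). if c = b then 1 else 0)"
  proof (rule sum.cong)
    fix c assume "c \<in> set (take k l)"
    hence "c \<in> set l" using set_take_subset[of k l] by blast
    hence "c \<in> Basis" using assms(2) by blast
    thus "c \<bullet> b = (if c = b then 1 else 0)" using assms(3) by (simp add: inner_Basis)
  qed simp
  also have "\<dots> = (if b \<in> set (take k l) then 1 else 0)" by (simp add: sum.delta')
  finally show ?thesis .
qed

lemma nth_in_take:
  assumes "distinct l" "j < length l"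
  shows "l ! j \<in> set (take k l) \<longleftrightarrow> j < k"
proof
  assume a: "l ! j \<in> set (take k l)"
  show "j < k"
  proof (rule ccontr)
    assume "\<not> j < k"
    hence "drop k l ! (j - k) = l ! j" "j - k < length (drop k l)" using assms(2) by auto
    hence "l ! j \<in> set (drop k l)" by (metis nth_mem)
    moreover have "set (take k l) \<inter> set (drop k l) = {}"
      using assms(1) distinct_append[of "take k l" "drop k l"] by simp
    ultimately show False using a by blast
  qed
next
  assume "j < k"
  hence "take k l ! j = l ! j" "j < length (take k l)" using assms by auto
  thus "l ! j \<in> set (take k l)" using nth_mem[of j "take k l"] by simp
qed

lemma wv_inner:
  fixes l :: "'a::euclidean_space list"
  assumes "l \<in> permutations_of_set Basis" "j < length l"
  shows "wv h z l k \<bullet> (l ! j) = h * (z \<bullet> (l ! j)) + h * (if j < k then 1 else 0)"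
proof -
  have l: "distinct l" "set l = Basis" using assms(1) by (auto simp: permutations_of_set_def)
  have b: "l ! j \<in> Basis" using l assms(2) nth_mem by blast
  show ?thesis unfolding wv_def using sum_take_inner[OF l(1) _ b, of k] nth_in_take[OF l(1) assms(2), of k] l
    by (simp add: inner_add_left algebra_simps)
qed

lemma perm_len: "l \<in> permutations_of_set (Basis::'a::euclidean_space set) \<Longrightarrow> length l = DIM('a)"
  using distinct_card[of l] by (simp add: permutations_of_set_def)

lemma basis_nth: "l \<in> permutations_of_set (Basis::'a::euclidean_space set) \<Longrightarrow> b \<in> Basis \<Longrightarrow> \<exists>j<length l. l ! j = b"
  using in_set_conv_nth[of b l] by (simp add: permutations_of_set_def)

lemma wv_inj:
  assumes "l \<in> permutations_of_set (Basis::'a::euclidean_space set)" "h > 0"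
  shows "inj_on (wv h z l) {..length l}"
proof (rule inj_onI)
  fix k1 k2 assume k: "k1 \<in> {..length l}" "k2 \<in> {..length l}" and e: "wv h z l k1 = wv h z l k2"
  show "k1 = k2"
  proof (rule ccontr)
    assume "k1 \<noteq> k2"
    then consider "k1 < k2" | "k2 < k1" by linarith
    thus False
    proof cases
      case 1
      hence "k1 < length l" using k by auto
      from wv_inner[OF assms(1) this, of h z k1] wv_inner[OF assms(1) this, of h z k2] e 1 assms(2)
      show False by simp
    next
      case 2
      hence "k2 < length l" using k by auto
      from wv_inner[OF assms(1) this, of h z k1] wv_inner[OF assms(1) this, of h z k2] e 2 assms(2)
      show False by simp
    qed
  qed
qed

lemma KS_simplex:
  assumes l: "l \<in> permutations_of_set (Basis::'a::euclidean_space set)" and h: "h > 0"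
  shows "int DIM('a) simplex KS h z l"
proof -
  define C where "C = wv h z l ` {..length l}"
  have cardC: "card C = DIM('a) + 1" unfolding C_def using card_image[OF wv_inj[OF l h]] perm_len[OF l] by simp
  define C0 where "C0 = (\<lambda>k. h *\<^sub>R sum_list (take k l)) ` {..length l}"
  have CC0: "C = (+) (h *\<^sub>R z) ` C0" unfolding C_def C0_def wv_def by (auto simp: image_image scaleR_add_right)
  have "0 \<in> C0" unfolding C0_def by force
  hence "affine hull C0 = span C0" by (simp add: affine_hull_span_0 hull_inc)
  moreover have "Basis \<subseteq> span C0"
  proof
    fix b :: 'a assume "b \<in> Basis"
    then obtain j where j: "j < length l" "l ! j = b" using basis_nth[OF l] by blast
    have "h *\<^sub>R sum_list (take (Suc j) l) \<in> C0" "h *\<^sub>R sum_list (take j l) \<in> C0" unfolding C0_def using j by auto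
    hence "h *\<^sub>R sum_list (take (Suc j) l) - h *\<^sub>R sum_list (take j l) \<in> span C0" by (simp add: span_base span_diff)
    moreover have "h *\<^sub>R sum_list (take (Suc j) l) - h *\<^sub>R sum_list (take j l) = h *\<^sub>R b"
      using j by (simp add: take_Suc_conv_app_nth algebra_simps)
    ultimately have "h *\<^sub>R b \<in> span C0" by simp
    hence "(1/h) *\<^sub>R (h *\<^sub>R b) \<in> span C0" by (rule span_mul)
    thus "b \<in> span C0" using h by simp
  qed
  hence "span (Basis::'a set) \<subseteq> span C0" by (rule span_minimal) simp
  ultimately have "affine hull C0 = UNIV" by (simp add: span_Basis top_unique)
  hence "aff_dim C0 = DIM('a)" using aff_dim_affine_hull[of C0] by simp
  hence "aff_dim C = DIM('a)" unfolding CC0 by (simp add: aff_dim_translation_eq)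
  moreover have "finite C" unfolding C_def by simp
  ultimately have "\<not> affine_dependent C" using cardC by (simp add: affine_independent_iff_card)
  thus ?thesis unfolding simplex_def KS_def C_def[symmetric] using cardC by auto
qed

lemma wv_inner_basis:
  fixes l :: "'a::euclidean_space list"
  assumes "l \<in> permutations_of_set Basis" "b \<in> Basis"
  shows "wv h z l k \<bullet> b = h * (z \<bullet> b) + h * (if b \<in> set (take k l) then 1 else 0)"
proof -
  have l: "distinct l" "set l \<subseteq> Basis" using assms(1) by (auto simp: permutations_of_set_def)
  show ?thesis unfolding wv_def using sum_take_inner[OF l assms(2), of k]
    by (simp add: inner_add_left algebra_simps)
qed

lemma KS_cube:
  assumes l: "l \<in> permutations_of_set (Basis::'a::euclidean_space set)" and h: "h > 0"
  shows "KS h z l \<subseteq> cbox (h *\<^sub>R z) (h *\<^sub>R (z + One))"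
  unfolding KS_def
proof (rule hull_minimal)
  show "convex (cbox (h *\<^sub>R z) (h *\<^sub>R (z + One)))" by (rule convex_box)
  show "wv h z l ` {..length l} \<subseteq> cbox (h *\<^sub>R z) (h *\<^sub>R (z + One))"
  proof
    fix v assume "v \<in> wv h z l ` {..length l}"
    then obtain k where v: "v = wv h z l k" by auto
    show "v \<in> cbox (h *\<^sub>R z) (h *\<^sub>R (z + One))"
      unfolding mem_box v using wv_inner_basis[OF l] h by (auto simp: inner_add_left algebra_simps)
  qed
qed

lemma KS_ord:
  assumes l: "l \<in> permutations_of_set (Basis::'a::euclidean_space set)" and h: "h > 0"
    and ij: "i < j" "j < length l"
  shows "KS h z l \<subseteq> {x. (x - h *\<^sub>R z) \<bullet> (l ! j) \<le> (x - h *\<^sub>R z) \<bullet> (l ! i)}"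
  unfolding KS_def
proof (rule hull_minimal)
  have e: "{x. (x - h *\<^sub>R z) \<bullet> (l ! j) \<le> (x - h *\<^sub>R z) \<bullet> (l ! i)} =
        {x. inner (l ! j - l ! i) x \<le> (h *\<^sub>R z) \<bullet> (l ! j) - (h *\<^sub>R z) \<bullet> (l ! i)}"
    by (auto simp: inner_diff_left inner_diff_right inner_commute algebra_simps)
  show "convex {x. (x - h *\<^sub>R z) \<bullet> (l ! j) \<le> (x - h *\<^sub>R z) \<bullet> (l ! i)}"
    unfolding e by (rule convex_halfspace_le)
  show "wv h z l ` {..length l} \<subseteq> {x. (x - h *\<^sub>R z) \<bullet> (l ! j) \<le> (x - h *\<^sub>R z) \<bullet> (l ! i)}"
  proof
    fix v assume "v \<in> wv h z l ` {..length l}"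
    then obtain k where v: "v = wv h z l k" by auto
    have "i < length l" using ij by simp
    show "v \<in> {x. (x - h *\<^sub>R z) \<bullet> (l ! j) \<le> (x - h *\<^sub>R z) \<bullet> (l ! i)}"
      using wv_inner[OF l ij(2), of h z k] wv_inner[OF l \<open>i < length l\<close>, of h z k] h ij
      unfolding v by (auto simp: inner_diff_left)
  qed
qed

lemma first_diff:
  assumes "distinct l" "distinct l'" "set l = set l'" "l \<noteq> l'"
  shows "\<exists>i j j'. i < j \<and> j < length l \<and> i < j' \<and> j' < length l' \<and> l' ! j' = l ! i \<and> l ! j = l' ! i \<and> l ! i \<noteq> l' ! i"
proof -
  have len: "length l = length l'" using assms distinct_card[of l] distinct_card[of l'] by simp
  have "\<exists>i. i < length l \<and> l ! i \<noteq> l' ! i"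
    using assms(4) len nth_equalityI[of l l'] by auto
  define i where "i = (LEAST i. i < length l \<and> l ! i \<noteq> l' ! i)"
  have i: "i < length l" "l ! i \<noteq> l' ! i" using LeastI_ex[OF \<open>\<exists>i. _\<close>] unfolding i_def by auto
  have before: "l ! m = l' ! m" if "m < i" for m
    using not_less_Least[OF that[unfolded i_def]] i that unfolding i_def by auto
  have "l' ! i \<in> set l" using assms(3) i len by simp
  then obtain j where j: "j < length l" "l ! j = l' ! i" by (auto simp: in_set_conv_nth)
  have "i < j"
  proof (rule ccontr)
    assume "\<not> i < j"
    moreover have "j \<noteq> i" using j i by auto
    ultimately have "j < i" by simp
    hence "l' ! j = l' ! i" using before j by simp
    moreover have "j < length l'" "i < length l'" using \<open>j < i\<close> i(1) len by auto
    ultimately have "j = i" using nth_eq_iff_index_eq[OF assms(2), of j i] by simp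
    thus False using \<open>j < i\<close> by simp
  qed
  have "l ! i \<in> set l'" using nth_mem[OF i(1)] assms(3) by simp
  then obtain j' where j': "j' < length l'" "l' ! j' = l ! i" by (auto simp: in_set_conv_nth)
  have "i < j'"
  proof (rule ccontr)
    assume "\<not> i < j'"
    moreover have "j' \<noteq> i" using j' i by auto
    ultimately have "j' < i" by simp
    hence "l ! j' = l ! i" using before j' by simp
    moreover have "j' < length l" using \<open>j' < i\<close> i(1) by auto
    ultimately have "j' = i" using nth_eq_iff_index_eq[OF assms(1), of j' i] i(1) by simp
    thus False using \<open>j' < i\<close> by simp
  qed
  show ?thesis using \<open>i < j\<close> \<open>i < j'\<close> j j' i by blast
qed

lemma KS_disj_same:
  assumes l: "l \<in> permutations_of_set (Basis::'a::euclidean_space set)"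
    and l': "l' \<in> permutations_of_set (Basis::'a::euclidean_space set)" and h: "h > 0" and ne: "l \<noteq> l'"
  shows "interior (KS h z l) \<inter> interior (KS h z l') = {}"
proof (rule ccontr)
  assume "interior (KS h z l) \<inter> interior (KS h z l') \<noteq> {}"
  then obtain x where x: "x \<in> interior (KS h z l) \<inter> interior (KS h z l')" by auto
  have dl: "distinct l" "distinct l'" "set l = Basis" "set l' = Basis" using l l' by (auto simp: permutations_of_set_def)
  obtain i j j' where ij: "i < j" "j < length l" "i < j'" "j' < length l'" "l' ! j' = l ! i" "l ! j = l' ! i" "l ! i \<noteq> l' ! i"
    using first_diff[OF dl(1,2) _ ne] dl by auto
  define a where "a = l ! i"
  define b where "b = l' ! i"
  have "i < length l" "i < length l'" using ij by auto
  hence ab: "a \<in> Basis" "b \<in> Basis" "a \<noteq> b" using ij(7) dl(3,4) nth_mem unfolding a_def b_def by blast+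
  have S1: "KS h z l \<subseteq> {x. (x - h *\<^sub>R z) \<bullet> b \<le> (x - h *\<^sub>R z) \<bullet> a}"
    using KS_ord[OF l h ij(1,2)] ij unfolding a_def b_def by simp
  have S2: "KS h z l' \<subseteq> {x. (x - h *\<^sub>R z) \<bullet> a \<le> (x - h *\<^sub>R z) \<bullet> b}"
    using KS_ord[OF l' h ij(3,4)] ij unfolding a_def b_def by simp
  have U: "open (interior (KS h z l) \<inter> interior (KS h z l'))" by auto
  obtain e where e: "e > 0" "ball x e \<subseteq> interior (KS h z l) \<inter> interior (KS h z l')"
    using open_contains_ball[of "interior (KS h z l) \<inter> interior (KS h z l')"] U x by blast
  have sub: "interior (KS h z l) \<inter> interior (KS h z l') \<subseteq> {x. (x - h *\<^sub>R z) \<bullet> b = (x - h *\<^sub>R z) \<bullet> a}"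
  proof
    fix y assume "y \<in> interior (KS h z l) \<inter> interior (KS h z l')"
    hence "y \<in> KS h z l" "y \<in> KS h z l'" using interior_subset by auto
    thus "y \<in> {x. (x - h *\<^sub>R z) \<bullet> b = (x - h *\<^sub>R z) \<bullet> a}" using S1 S2 by fastforce
  qed
  define x' where "x' = x + (e/2) *\<^sub>R a"
  have "x' \<in> ball x e" unfolding x'_def using e ab by (simp add: dist_norm)
  hence "(x' - h *\<^sub>R z) \<bullet> b = (x' - h *\<^sub>R z) \<bullet> a" using e sub by blast
  moreover have "(x - h *\<^sub>R z) \<bullet> b = (x - h *\<^sub>R z) \<bullet> a" using x sub by blast
  moreover have "a \<bullet> b = 0" "a \<bullet> a = 1" using ab by (auto simp: inner_Basis)
  ultimately show False unfolding x'_def using e by (simp add: inner_add_left inner_commute algebra_simps)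
qed

lemma KS_disj_diff:
  assumes l: "l \<in> permutations_of_set (Basis::'a::euclidean_space set)"
    and l': "l' \<in> permutations_of_set (Basis::'a::euclidean_space set)" and h: "h > 0"
    and zi: "\<forall>b\<in>Basis. z \<bullet> b \<in> \<int>" and zi': "\<forall>b\<in>Basis. z' \<bullet> b \<in> \<int>" and ne: "z \<noteq> z'"
  shows "interior (KS h z l) \<inter> interior (KS h z' l') = {}"
proof (rule ccontr)
  assume "interior (KS h z l) \<inter> interior (KS h z' l') \<noteq> {}"
  then obtain x where x: "x \<in> interior (KS h z l)" "x \<in> interior (KS h z' l')" by auto
  have x1: "x \<in> box (h *\<^sub>R z) (h *\<^sub>R (z + One))"
    using interior_mono[OF KS_cube[OF l h, of z]] x(1) interior_cbox by blast
  have x2: "x \<in> box (h *\<^sub>R z') (h *\<^sub>R (z' + One))"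
    using interior_mono[OF KS_cube[OF l' h, of z']] x(2) interior_cbox by blast
  have "\<not> (\<forall>b\<in>Basis. z \<bullet> b = z' \<bullet> b)" using ne euclidean_eqI[of z z'] by auto
  then obtain b where b: "b \<in> Basis" "z \<bullet> b \<noteq> z' \<bullet> b" by auto
  have "z \<bullet> b \<in> \<int>" using zi b by blast
  then obtain p where p: "z \<bullet> b = of_int p" by (rule Ints_cases)
  have "z' \<bullet> b \<in> \<int>" using zi' b by blast
  then obtain q where q: "z' \<bullet> b = of_int q" by (rule Ints_cases)
  have "(h *\<^sub>R z) \<bullet> b < x \<bullet> b" "x \<bullet> b < (h *\<^sub>R (z + One)) \<bullet> b" using x1 b unfolding mem_box by blast+
  hence 1: "h * of_int p < x \<bullet> b" "x \<bullet> b < h * (of_int p + 1)" using b p by (simp_all add: inner_add_left)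
  have "(h *\<^sub>R z') \<bullet> b < x \<bullet> b" "x \<bullet> b < (h *\<^sub>R (z' + One)) \<bullet> b" using x2 b unfolding mem_box by blast+
  hence 2: "h * of_int q < x \<bullet> b" "x \<bullet> b < h * (of_int q + 1)" using b q by (simp_all add: inner_add_left)
  have "h * of_int p < h * (of_int q + 1)" "h * of_int q < h * (of_int p + 1)" using 1 2 by linarith+
  hence "real_of_int p < of_int q + 1" "real_of_int q < of_int p + 1" using h by (simp_all add: mult_less_cancel_left_pos)
  hence "p = q" by linarith
  thus False using b p q by simp
qed

lemma cube_cover:
  fixes x z :: "'a::euclidean_space"
  assumes h: "h > 0" and x: "x \<in> cbox (h *\<^sub>R z) (h *\<^sub>R (z + One))"
  shows "\<exists>l\<in>permutations_of_set Basis. x \<in> KS h z l"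
proof -
  obtain L0 where L0: "distinct L0" "set L0 = (Basis::'a set)" using finite_distinct_list[of "Basis::'a set"] by auto
  define key where "key = (\<lambda>b. - ((x - h *\<^sub>R z) \<bullet> b))"
  define l where "l = sort_key key L0"
  have lp: "l \<in> permutations_of_set Basis" unfolding l_def permutations_of_set_def using L0 by simp
  have len: "length l = DIM('a)" using perm_len[OF lp] .
  have srt: "sorted (map key l)" unfolding l_def by simp
  have mono: "(x - h *\<^sub>R z) \<bullet> (l ! j) \<le> (x - h *\<^sub>R z) \<bullet> (l ! i)" if "i \<le> j" "j < length l" for i j
  proof -
    have "map key l ! i \<le> map key l ! j" using sorted_nth_mono[OF srt, of i j] that by simp
    thus ?thesis using that by (simp add: key_def)
  qed
  have lB: "l ! j \<in> Basis" if "j < length l" for j using lp that nth_mem by (auto simp: permutations_of_set_def)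
  define d where "d = length l"
  define y where "y = (\<lambda>k. (x - h *\<^sub>R z) \<bullet> (l ! k) / h)"
  have y01: "0 \<le> y k" "y k \<le> 1" if "k < d" for k
  proof -
    have b: "l ! k \<in> Basis" using lB that d_def by simp
    have "(h *\<^sub>R z) \<bullet> (l ! k) \<le> x \<bullet> (l ! k) \<and> x \<bullet> (l ! k) \<le> (h *\<^sub>R (z + One)) \<bullet> (l ! k)"
      using x b unfolding mem_box by blast
    hence "h * (z \<bullet> (l ! k)) \<le> x \<bullet> (l ! k)" "x \<bullet> (l ! k) \<le> h * (z \<bullet> (l ! k)) + h"
      using b by (simp_all add: inner_add_left algebra_simps)
    thus "0 \<le> y k" "y k \<le> 1" using h unfolding y_def by (auto simp: inner_diff_left divide_simps)
  qed
  have ymono: "y j \<le> y i" if "i \<le> j" "j < d" for i j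
    using mono[OF that(1)] that h unfolding y_def d_def by (simp add: divide_right_mono)
  define Y where "Y = (\<lambda>k. if k = 0 then 1 else if k \<le> d then y (k - 1) else 0)"
  define c where "c = (\<lambda>k. Y k - Y (Suc k))"
  have tele: "(\<Sum>k = m..d. c k) = Y m" if "m \<le> Suc d" for m
  proof -
    have "(\<Sum>k = m..d. c k) = - (\<Sum>k = m..d. Y (Suc k) - Y k)" unfolding c_def by (simp add: sum_negf[symmetric])
    also have "\<dots> = Y m - Y (Suc d)" using sum_Suc_diff[OF that, of Y] by simp
    finally show ?thesis by (simp add: Y_def)
  qed
  have cnn: "c k \<ge> 0" if "k \<le> d" for k
  proof (cases "k = 0")
    case True
    show ?thesis
    proof (cases "d = 0")
      case False thus ?thesis using True y01[of 0] unfolding c_def Y_def by simp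
    qed (use True in \<open>simp add: c_def Y_def\<close>)
  next
    case False
    show ?thesis
    proof (cases "k = d")
      case True thus ?thesis using False y01[of "k - 1"] unfolding c_def Y_def by simp
    next
      case F2: False
      hence "k < d" using that by simp
      thus ?thesis using False ymono[of "k - 1" k] unfolding c_def Y_def by simp
    qed
  qed
  have csum: "(\<Sum>k\<in>{..d}. c k) = 1" using tele[of 0] by (simp add: atLeast0AtMost Y_def)
  have eq: "x = (\<Sum>k\<in>{..d}. c k *\<^sub>R wv h z l k)"
  proof (rule euclidean_eqI)
    fix b :: 'a assume b: "b \<in> Basis"
    then obtain j where j: "j < length l" "l ! j = b" using basis_nth[OF lp] by blast
    have "(\<Sum>k\<in>{..d}. c k *\<^sub>R wv h z l k) \<bullet> b = (\<Sum>k\<in>{..d}. c k * (h * (z \<bullet> b) + h * (if j < k then 1 else 0)))"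
      unfolding inner_sum_left j(2)[symmetric] by (simp add: wv_inner[OF lp j(1)])
    also have "\<dots> = (\<Sum>k\<in>{..d}. h * (z \<bullet> b) * c k + h * (if j < k then c k else 0))"
      by (rule sum.cong) (auto simp: algebra_simps)
    also have "\<dots> = h * (z \<bullet> b) * (\<Sum>k\<in>{..d}. c k) + h * (\<Sum>k\<in>{..d}. if j < k then c k else 0)"
      by (simp add: sum.distrib sum_distrib_left)
    also have "(\<Sum>k\<in>{..d}. if j < k then c k else 0) = (\<Sum>k\<in>{Suc j..d}. c k)"
    proof -
      have "(\<Sum>k\<in>{..d}. if j < k then c k else 0) = (\<Sum>k\<in>{..d} \<inter> {k. j < k}. c k)"
        by (simp add: sum.inter_restrict)
      also have "{..d} \<inter> {k. j < k} = {Suc j..d}" by auto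
      finally show ?thesis .
    qed
    also have "\<dots> = Y (Suc j)" using tele[of "Suc j"] j d_def by simp
    also have "Y (Suc j) = y j" using j d_def by (simp add: Y_def)
    finally show "x \<bullet> b = (\<Sum>k\<in>{..d}. c k *\<^sub>R wv h z l k) \<bullet> b"
      using csum h j unfolding y_def by (simp add: inner_diff_left)
  qed
  have "x \<in> KS h z l" unfolding KS_def eq d_def
    by (rule convex_sum) (use csum cnn d_def in \<open>auto intro: hull_inc\<close>)
  thus ?thesis using lp by blast
qed

definition fk :: "real \<Rightarrow> 'a::euclidean_space \<Rightarrow> real" where
  "fk h x = (\<Sum>b\<in>Basis. pf h (x \<bullet> b))"

lemma fk_affine:
  fixes z :: "'a::euclidean_space"
  assumes h: "h > 0" and zi: "\<forall>b\<in>Basis. z \<bullet> b \<in> \<int>"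
  shows "\<exists>v c. \<forall>x\<in>cbox (h *\<^sub>R z) (h *\<^sub>R (z + One)). fk h x = v \<bullet> x + c"
proof -
  define n where "n = (\<lambda>b. \<lfloor>z \<bullet> b\<rfloor>)"
  have zn: "z \<bullet> b = of_int (n b)" if "b \<in> Basis" for b
    using zi that unfolding n_def by (metis Ints_cases floor_of_int)
  define v where "v = (\<Sum>b\<in>Basis. ((2 * of_int (n b) + 1) * h) *\<^sub>R b)"
  define c where "c = - (\<Sum>b\<in>Basis. of_int (n b) * (of_int (n b) + 1) * h\<^sup>2)"
  have "fk h x = v \<bullet> x + c" if x: "x \<in> cbox (h *\<^sub>R z) (h *\<^sub>R (z + One))" for x
  proof -
    have "pf h (x \<bullet> b) = Lf h (n b) (x \<bullet> b)" if b: "b \<in> Basis" for b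
    proof (rule pf_eq[OF h])
      have "(h *\<^sub>R z) \<bullet> b \<le> x \<bullet> b" "x \<bullet> b \<le> (h *\<^sub>R (z + One)) \<bullet> b" using x b unfolding mem_box by blast+
      thus "of_int (n b) * h \<le> x \<bullet> b" "x \<bullet> b \<le> (of_int (n b) + 1) * h"
        using zn[OF b] b by (simp_all add: inner_add_left algebra_simps)
    qed
    hence "fk h x = (\<Sum>b\<in>Basis. Lf h (n b) (x \<bullet> b))" unfolding fk_def by simp
    also have "\<dots> = (\<Sum>b\<in>Basis. (2 * of_int (n b) + 1) * h * (x \<bullet> b)) + c"
      unfolding Lf_def c_def by (simp add: sum_subtractf)
    also have "(\<Sum>b\<in>Basis. (2 * of_int (n b) + 1) * h * (x \<bullet> b)) = v \<bullet> x"
    proof -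
      have "v \<bullet> x = (\<Sum>b\<in>Basis. ((2 * of_int (n b) + 1) * h) * (b \<bullet> x))"
        unfolding v_def by (simp add: inner_sum_left)
      also have "\<dots> = (\<Sum>b\<in>Basis. (2 * of_int (n b) + 1) * h * (x \<bullet> b))" by (simp add: inner_commute)
      finally show ?thesis by simp
    qed
    finally show ?thesis .
  qed
  thus ?thesis by blast
qed

lemma fk_convex:
  fixes S :: "'a::euclidean_space set"
  assumes S: "convex S" and h: "h > 0"
  shows "convex_on S (fk h)"
proof (rule convex_onI)
  show "convex S" by (rule S)
next
  fix t :: real and x y :: 'a assume t: "0 < t" "t < 1"
  have "fk h ((1 - t) *\<^sub>R x + t *\<^sub>R y) = (\<Sum>b\<in>Basis. pf h ((1 - t) *\<^sub>R (x \<bullet> b) + t *\<^sub>R (y \<bullet> b)))"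
    unfolding fk_def by (simp add: inner_add_left)
  also have "\<dots> \<le> (\<Sum>b\<in>Basis. (1 - t) * pf h (x \<bullet> b) + t * pf h (y \<bullet> b))"
    by (rule sum_mono, rule convex_onD[OF pf_convex[OF h]]) (use t in auto)
  also have "\<dots> = (1 - t) * fk h x + t * fk h y"
    unfolding fk_def by (simp add: sum.distrib sum_distrib_left)
  finally show "fk h ((1 - t) *\<^sub>R x + t *\<^sub>R y) \<le> (1 - t) * fk h x + t * fk h y" .
qed

lemma norm_sq_sum: "(norm (x::'a::euclidean_space))\<^sup>2 = (\<Sum>b\<in>Basis. (x \<bullet> b)\<^sup>2)"
  unfolding power2_norm_eq_inner by (subst euclidean_inner) (simp add: power2_eq_square)

lemma fk_err:
  fixes x :: "'a::euclidean_space"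
  assumes h: "h > 0"
  shows "0 \<le> fk h x - (norm x)\<^sup>2" "fk h x - (norm x)\<^sup>2 \<le> DIM('a) * (h\<^sup>2 / 4)"
proof -
  have e: "fk h x - (norm x)\<^sup>2 = (\<Sum>b\<in>Basis. pf h (x \<bullet> b) - (x \<bullet> b)\<^sup>2)"
    unfolding fk_def norm_sq_sum by (simp add: sum_subtractf)
  show "0 \<le> fk h x - (norm x)\<^sup>2" unfolding e by (rule sum_nonneg) (use pf_err[OF h] in auto)
  have "(\<Sum>b\<in>Basis. pf h (x \<bullet> b) - (x \<bullet> b)\<^sup>2) \<le> (\<Sum>b\<in>(Basis::'a set). h\<^sup>2 / 4)"
    by (rule sum_mono) (use pf_err[OF h] in auto)
  thus "fk h x - (norm x)\<^sup>2 \<le> DIM('a) * (h\<^sup>2 / 4)" unfolding e by simp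
qed

lemma fk_lip:
  assumes h: "0 < h" "h \<le> 1"
  shows "(5 * DIM('a))-lipschitz_on (cball (0::'a::euclidean_space) 1) (fk h)"
proof (rule lipschitz_onI)
  fix x y :: 'a assume x: "x \<in> cball 0 1" and y: "y \<in> cball 0 1"
  have "\<bar>fk h x - fk h y\<bar> = \<bar>\<Sum>b\<in>Basis. pf h (x \<bullet> b) - pf h (y \<bullet> b)\<bar>"
    unfolding fk_def by (simp add: sum_subtractf)
  also have "\<dots> \<le> (\<Sum>b\<in>Basis. \<bar>pf h (x \<bullet> b) - pf h (y \<bullet> b)\<bar>)" by (rule sum_abs)
  also have "\<dots> \<le> (\<Sum>b\<in>(Basis::'a set). 5 * norm (x - y))"
  proof (rule sum_mono)
    fix b :: 'a assume b: "b \<in> Basis"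
    have "\<bar>x \<bullet> b\<bar> \<le> 1" "\<bar>y \<bullet> b\<bar> \<le> 1" using Basis_le_norm[OF b, of x] Basis_le_norm[OF b, of y] x y by auto
    hence "\<bar>pf h (x \<bullet> b) - pf h (y \<bullet> b)\<bar> \<le> 5 * \<bar>x \<bullet> b - y \<bullet> b\<bar>" by (rule pf_lip[OF h])
    also have "\<bar>x \<bullet> b - y \<bullet> b\<bar> \<le> norm (x - y)" using Basis_le_norm[OF b, of "x - y"] by (simp add: inner_diff_left)
    finally show "\<bar>pf h (x \<bullet> b) - pf h (y \<bullet> b)\<bar> \<le> 5 * norm (x - y)" by simp
  qed
  also have "\<dots> = (5 * DIM('a)) * dist x y" by (simp add: dist_norm)
  finally show "dist (fk h x) (fk h y) \<le> real (5 * DIM('a)) * dist x y" by (simp add: dist_real_def)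
qed simp

lemma fk_bound:
  assumes h: "0 < h" "h \<le> 1" and x: "norm (x::'a::euclidean_space) \<le> 1"
  shows "\<bar>fk h x\<bar> \<le> 1 + DIM('a)"
proof -
  have "(norm x)\<^sup>2 \<le> 1" using x by (simp add: abs_square_le_1)
  moreover have "h\<^sup>2 \<le> 1" using h by (simp add: abs_square_le_1)
  moreover have "real DIM('a) * (h\<^sup>2 / 4) \<le> real DIM('a) * 1"
    by (rule mult_left_mono) (use \<open>h\<^sup>2 \<le> 1\<close> in auto)
  moreover have "0 \<le> (norm x)\<^sup>2" by simp
  moreover note fk_err[OF h(1), of x]
  ultimately show ?thesis unfolding abs_le_iff by linarith
qed

theorem lemma8p3:
  fixes r :: real
  assumes "r > 0"
  shows "\<exists>C>0. \<forall>(\<Omega>::'a::euclidean_space set) (k::nat).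
    convex_body \<Omega> \<and> \<Omega> \<subseteq> cball 0 1 \<and> ball 0 r \<subseteq> \<Omega> \<and> k \<ge> 1 \<longrightarrow>
    (\<exists>(m::nat) (\<Delta>::nat \<Rightarrow> 'a set) (f::'a \<Rightarrow> real).
       real m \<le> C * real k \<and>
       (\<forall>i\<in>{1..m}. int DIM('a) simplex \<Delta> i \<and> \<Delta> i \<subseteq> \<Omega>) \<and>
       (\<forall>i\<in>{1..m}. \<forall>j\<in>{1..m}. i \<noteq> j \<longrightarrow> interior (\<Delta> i) \<inter> interior (\<Delta> j) = {}) \<and>
       convex_on \<Omega> f \<and>
       (1 - C * real k powr (-1 / real DIM('a)) > 0 \<longrightarrow>
          (\<lambda>x. (1 - C * real k powr (-1 / real DIM('a))) *\<^sub>R x) ` \<Omega> \<subseteq> (\<Union>i\<in>{1..m}. \<Delta> i)) \<and>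
       (\<Union>i\<in>{1..m}. \<Delta> i) \<subseteq> \<Omega> \<and>
       (\<forall>i\<in>{1..m}. \<exists>(v::'a) (b::real). \<forall>x\<in>\<Delta> i. f x = v \<bullet> x + b) \<and>
       (\<forall>x\<in>\<Omega>. \<bar>(norm x)\<^sup>2 - f x\<bar> \<le> C * real k powr (-2 / real DIM('a))) \<and>
       convex_lip_bdd C \<Omega> f)"
proof -
  define D where "D = DIM('a)"
  define d where "d = real D"
  have d1: "d \<ge> 1" unfolding d_def D_def using DIM_positive[where 'a='a] by linarith
  define C where "C = 6 ^ D * fact D + 6 * d + 2 + 2 * d / r"
  have C6: "C \<ge> 6 ^ D * fact D" "C \<ge> 6 * d + 2" "C * r \<ge> 2 * d"
  proof -
    have "(0::real) \<le> 6 ^ D * fact D" by simp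
    moreover have "0 \<le> 2 * d / r" using d1 assms by simp
    moreover have "0 \<le> 6 * d + 2" using d1 by simp
    ultimately show "C \<ge> 6 ^ D * fact D" "C \<ge> 6 * d + 2" unfolding C_def by linarith+
    have "C * r = (6 ^ D * fact D + 6 * d + 2) * r + 2 * d" unfolding C_def using assms by (simp add: field_simps)
    moreover have "0 \<le> (6 ^ D * fact D + 6 * d + 2) * r" using assms d1 by simp
    ultimately show "C * r \<ge> 2 * d" by linarith
  qed
  have Cpos: "C > 0" using C6(2) d1 by linarith
  show ?thesis
  proof (rule exI[of _ C], intro conjI allI impI)
    show "C > 0" by (rule Cpos)
    fix \<Omega> :: "'a set" and k :: nat
    assume H: "convex_body \<Omega> \<and> \<Omega> \<subseteq> cball 0 1 \<and> ball 0 r \<subseteq> \<Omega> \<and> k \<ge> 1"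
    have cvx: "convex \<Omega>" and Ob: "\<Omega> \<subseteq> cball 0 1" and Br: "ball 0 r \<subseteq> \<Omega>" and k1: "k \<ge> 1"
      using H by (auto simp: convex_body_def)
    define s where "s = real k powr (1 / d)"
    have s1: "s \<ge> 1" unfolding s_def using k1 d1 by (intro ge_one_powr_ge_zero) auto
    have sD: "s ^ D = real k"
    proof -
      have "s ^ D = s powr real D" using s1 by (simp add: powr_realpow)
      also have "\<dots> = real k powr (1 / d * d)" unfolding s_def d_def by (simp add: powr_powr)
      also have "\<dots> = real k" using d1 k1 by simp
      finally show ?thesis .
    qed
    have km1: "real k powr (-1 / real DIM('a)) = 1 / s"
      unfolding s_def d_def D_def by (simp add: powr_minus divide_inverse)
    have km2: "real k powr (-2 / real DIM('a)) = (1 / s)\<^sup>2"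
    proof -
      have "-2 / real DIM('a) = -1 / real DIM('a) + -1 / real DIM('a)" by simp
      hence "real k powr (-2 / real DIM('a)) = real k powr (-1 / real DIM('a)) * real k powr (-1 / real DIM('a))"
        by (simp add: powr_add[symmetric])
      thus ?thesis using km1 by (simp add: power2_eq_square)
    qed
    define n where "n = nat \<lceil>s\<rceil>"
    have n: "real n \<ge> s" "real n < s + 1" "n \<ge> 1" unfolding n_def using s1 by linarith+
    define h where "h = 1 / real n"
    have h: "h > 0" "h \<le> 1" "h * s \<le> 1" "h \<le> 1 / s" unfolding h_def using n s1
      by (auto simp: field_simps)
    define Z where "Z = {z::'a. (\<forall>b\<in>Basis. z \<bullet> b \<in> \<int>) \<and> cbox (h *\<^sub>R z) (h *\<^sub>R (z + One)) \<subseteq> \<Omega>}"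
    define P where "P = permutations_of_set (Basis::'a set)"
    define T where "T = Z \<times> P"
    define G where "G = (\<lambda>g. \<Sum>b\<in>Basis. of_int (g b) *\<^sub>R b) ` (PiE (Basis::'a set) (\<lambda>_. {- int n..int n}))"
    have ZG: "Z \<subseteq> G"
    proof
      fix z assume z: "z \<in> Z"
      have zi: "\<forall>b\<in>Basis. z \<bullet> b \<in> \<int>" and zc: "cbox (h *\<^sub>R z) (h *\<^sub>R (z + One)) \<subseteq> \<Omega>" using z by (auto simp: Z_def)
      have "h *\<^sub>R z \<in> cbox (h *\<^sub>R z) (h *\<^sub>R (z + One))" using h(1) by (auto simp: mem_box inner_add_left)
      hence nz: "norm (h *\<^sub>R z) \<le> 1" using zc Ob by auto
      define g where "g = restrict (\<lambda>b. \<lfloor>z \<bullet> b\<rfloor>) Basis"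
      have zb: "z \<bullet> b = of_int \<lfloor>z \<bullet> b\<rfloor>" if "b \<in> Basis" for b
        using zi that by (metis Ints_cases floor_of_int)
      have "g \<in> PiE Basis (\<lambda>_. {- int n..int n})"
      proof -
        have "\<lfloor>z \<bullet> b\<rfloor> \<in> {- int n..int n}" if b: "b \<in> Basis" for b
        proof -
          have "\<bar>(h *\<^sub>R z) \<bullet> b\<bar> \<le> 1" using Basis_le_norm[OF b, of "h *\<^sub>R z"] nz by linarith
          hence "h * \<bar>z \<bullet> b\<bar> \<le> 1" using h(1) by (simp add: abs_mult)
          hence "\<bar>z \<bullet> b\<bar> \<le> real n" using h(1) n(3) unfolding h_def by (simp add: field_simps)
          hence "\<bar>real_of_int \<lfloor>z \<bullet> b\<rfloor>\<bar> \<le> real n" using zb[OF b] by simp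
          thus ?thesis by (simp add: abs_le_iff)
        qed
        thus ?thesis unfolding g_def by auto
      qed
      moreover have "z = (\<Sum>b\<in>Basis. of_int (g b) *\<^sub>R b)"
      proof -
        have "z = (\<Sum>b\<in>Basis. (z \<bullet> b) *\<^sub>R b)" by (simp add: euclidean_representation)
        also have "\<dots> = (\<Sum>b\<in>Basis. of_int (g b) *\<^sub>R b)"
          by (rule sum.cong) (auto simp: g_def zb[symmetric])
        finally show ?thesis .
      qed
      ultimately show "z \<in> G" unfolding G_def by blast
    qed
    have finG: "finite G" unfolding G_def by (intro finite_imageI finite_PiE) auto
    have cardG: "card G \<le> (2 * n + 1) ^ D"
    proof -
      have "card G \<le> card (PiE (Basis::'a set) (\<lambda>_. {- int n..int n}))" unfolding G_def by (rule card_image_le) (intro finite_PiE, auto)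
      also have "\<dots> = (2 * n + 1) ^ D" by (simp add: card_PiE D_def nat_add_distrib nat_mult_distrib)
      finally show ?thesis .
    qed
    have finZ: "finite Z" using ZG finG finite_subset by blast
    have cardZ: "card Z \<le> (2 * n + 1) ^ D" using card_mono[OF finG ZG] cardG by linarith
    have finP: "finite P" unfolding P_def by (simp add: finite_permutations_of_set)
    have cardP: "card P = fact D" unfolding P_def D_def by (simp add: card_permutations_of_set)
    have finT: "finite T" unfolding T_def using finZ finP by simp
    define m where "m = card T"
    have mle: "real m \<le> C * real k"
    proof -
      have "m \<le> (2 * n + 1) ^ D * fact D" unfolding m_def T_def card_cartesian_product cardP
        using cardZ by simp
      hence "real m \<le> real (2 * n + 1) ^ D * fact D" by (metis of_nat_fact of_nat_le_iff of_nat_mult of_nat_power)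
      also have "real (2 * n + 1) ^ D \<le> (6 * s) ^ D"
        by (rule power_mono) (use n s1 in auto)
      also have "(6 * s) ^ D = 6 ^ D * real k" by (simp add: power_mult_distrib sD)
      finally have "real m \<le> 6 ^ D * fact D * real k" by (simp add: mult_ac)
      also have "\<dots> \<le> C * real k" using C6(1) by (intro mult_right_mono) auto
      finally show ?thesis .
    qed
    obtain g where g: "bij_betw g {1..m} T" using ex_bij_betw_nat_finite_1[OF finT] unfolding m_def by blast
    have gT: "g i \<in> T" if "i \<in> {1..m}" for i using g that bij_betwE by blast
    define \<Delta> where "\<Delta> = (\<lambda>i. KS h (fst (g i)) (snd (g i)))"
    have gZ: "fst (g i) \<in> Z" and gP: "snd (g i) \<in> P" if "i \<in> {1..m}" for i
      using gT[OF that] unfolding T_def by auto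
    have \<Delta>cube: "\<Delta> i \<subseteq> cbox (h *\<^sub>R fst (g i)) (h *\<^sub>R (fst (g i) + One))" if "i \<in> {1..m}" for i
      unfolding \<Delta>_def using KS_cube[OF gP[OF that, unfolded P_def] h(1)] .
    have \<Delta>O: "\<Delta> i \<subseteq> \<Omega>" if "i \<in> {1..m}" for i
      using \<Delta>cube[OF that] gZ[OF that] unfolding Z_def by auto
    define f :: "'a \<Rightarrow> real" where "f = fk h"
    show "\<exists>(m::nat) (\<Delta>::nat \<Rightarrow> 'a set) (f::'a \<Rightarrow> real).
       real m \<le> C * real k \<and>
       (\<forall>i\<in>{1..m}. int DIM('a) simplex \<Delta> i \<and> \<Delta> i \<subseteq> \<Omega>) \<and>
       (\<forall>i\<in>{1..m}. \<forall>j\<in>{1..m}. i \<noteq> j \<longrightarrow> interior (\<Delta> i) \<inter> interior (\<Delta> j) = {}) \<and>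
       convex_on \<Omega> f \<and>
       (1 - C * real k powr (-1 / real DIM('a)) > 0 \<longrightarrow>
          (\<lambda>x. (1 - C * real k powr (-1 / real DIM('a))) *\<^sub>R x) ` \<Omega> \<subseteq> (\<Union>i\<in>{1..m}. \<Delta> i)) \<and>
       (\<Union>i\<in>{1..m}. \<Delta> i) \<subseteq> \<Omega> \<and>
       (\<forall>i\<in>{1..m}. \<exists>(v::'a) (b::real). \<forall>x\<in>\<Delta> i. f x = v \<bullet> x + b) \<and>
       (\<forall>x\<in>\<Omega>. \<bar>(norm x)\<^sup>2 - f x\<bar> \<le> C * real k powr (-2 / real DIM('a))) \<and>
       convex_lip_bdd C \<Omega> f"
    proof (intro exI[of _ m] exI[of _ \<Delta>] exI[of _ f] conjI)
      show "real m \<le> C * real k" by (rule mle)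
      show "\<forall>i\<in>{1..m}. int DIM('a) simplex \<Delta> i \<and> \<Delta> i \<subseteq> \<Omega>"
        using KS_simplex[OF gP[unfolded P_def] h(1)] \<Delta>O unfolding \<Delta>_def by blast
      show "\<forall>i\<in>{1..m}. \<forall>j\<in>{1..m}. i \<noteq> j \<longrightarrow> interior (\<Delta> i) \<inter> interior (\<Delta> j) = {}"
      proof (intro ballI impI)
        fix i j assume i: "i \<in> {1..m}" and j: "j \<in> {1..m}" and ij: "i \<noteq> j"
        have ne: "g i \<noteq> g j" using g i j ij unfolding bij_betw_def inj_on_def by blast
        show "interior (\<Delta> i) \<inter> interior (\<Delta> j) = {}"
        proof (cases "fst (g i) = fst (g j)")
          case True
          hence "snd (g i) \<noteq> snd (g j)" using ne prod_eq_iff by blast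
          thus ?thesis unfolding \<Delta>_def True
            using KS_disj_same[OF gP[OF i, unfolded P_def] gP[OF j, unfolded P_def] h(1)] by blast
        next
          case False
          thus ?thesis unfolding \<Delta>_def
            using KS_disj_diff[OF gP[OF i, unfolded P_def] gP[OF j, unfolded P_def] h(1)] gZ[OF i] gZ[OF j]
            unfolding Z_def by blast
        qed
      qed
      show "convex_on \<Omega> f" unfolding f_def by (rule fk_convex[OF cvx h(1)])
      show "1 - C * real k powr (-1 / real DIM('a)) > 0 \<longrightarrow>
          (\<lambda>x. (1 - C * real k powr (-1 / real DIM('a))) *\<^sub>R x) ` \<Omega> \<subseteq> (\<Union>i\<in>{1..m}. \<Delta> i)"
      proof
        define \<delta> where "\<delta> = C * real k powr (-1 / real DIM('a))"
        assume "1 - C * real k powr (-1 / real DIM('a)) > 0"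
        hence \<delta>1: "\<delta> < 1" unfolding \<delta>_def by simp
        have \<delta>s: "\<delta> = C / s" unfolding \<delta>_def km1 by simp
        have \<delta>0: "\<delta> > 0" unfolding \<delta>s using Cpos s1 by simp
        show "(\<lambda>x. (1 - C * real k powr (-1 / real DIM('a))) *\<^sub>R x) ` \<Omega> \<subseteq> (\<Union>i\<in>{1..m}. \<Delta> i)"
        proof
          fix p assume "p \<in> (\<lambda>x. (1 - C * real k powr (-1 / real DIM('a))) *\<^sub>R x) ` \<Omega>"
          then obtain y where y: "y \<in> \<Omega>" "p = (1 - \<delta>) *\<^sub>R y" unfolding \<delta>_def by auto
          define z where "z = (\<Sum>b\<in>Basis. of_int \<lfloor>(p \<bullet> b) / h\<rfloor> *\<^sub>R b)"
          have zb: "z \<bullet> b = of_int \<lfloor>(p \<bullet> b) / h\<rfloor>" if "b \<in> Basis" for b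
            unfolding z_def using that by simp
          have pcube: "p \<in> cbox (h *\<^sub>R z) (h *\<^sub>R (z + One))"
            unfolding mem_box using floor_div_bounds[OF h(1)] zb by (auto simp: inner_add_left algebra_simps)
          have "cbox (h *\<^sub>R z) (h *\<^sub>R (z + One)) \<subseteq> \<Omega>"
          proof
            fix q assume q: "q \<in> cbox (h *\<^sub>R z) (h *\<^sub>R (z + One))"
            have qb: "\<bar>(q - p) \<bullet> b\<bar> \<le> h" if b: "b \<in> Basis" for b
            proof -
              have "(h *\<^sub>R z) \<bullet> b \<le> q \<bullet> b \<and> q \<bullet> b \<le> (h *\<^sub>R (z + One)) \<bullet> b" using q b unfolding mem_box by blast
              moreover have "(h *\<^sub>R z) \<bullet> b \<le> p \<bullet> b \<and> p \<bullet> b \<le> (h *\<^sub>R (z + One)) \<bullet> b" using pcube b unfolding mem_box by blast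
              ultimately show ?thesis using b by (simp add: inner_add_left inner_diff_left abs_le_iff algebra_simps)
            qed
            have "norm (q - p) \<le> (\<Sum>b\<in>Basis. \<bar>(q - p) \<bullet> b\<bar>)" by (rule norm_le_l1)
            also have "\<dots> \<le> (\<Sum>b\<in>(Basis::'a set). h)" by (rule sum_mono) (rule qb)
            also have "\<dots> = d * h" unfolding d_def D_def by simp
            finally have nqp: "norm (q - p) \<le> d * h" .
            define w where "w = (1 / \<delta>) *\<^sub>R (q - p)"
            have "norm w \<le> d * h / \<delta>" unfolding w_def using nqp \<delta>0 by (simp add: divide_right_mono)
            also have "d * h / \<delta> = d * (h * s) / C" unfolding \<delta>s using Cpos s1 by (simp add: field_simps)
            also have "\<dots> \<le> d / C" using h(3) d1 Cpos by (intro divide_right_mono) (auto simp: mult_left_le)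
            also have "\<dots> < r"
            proof -
              have "d < C * r" using C6(3) d1 by linarith
              thus ?thesis using Cpos by (simp add: divide_less_eq mult.commute)
            qed
            finally have "w \<in> \<Omega>" using Br by auto
            have "q = (1 - \<delta>) *\<^sub>R y + \<delta> *\<^sub>R w" unfolding w_def y(2)[symmetric] using \<delta>0 by simp
            thus "q \<in> \<Omega>" using convexD[OF cvx y(1) \<open>w \<in> \<Omega>\<close>, of "1 - \<delta>" \<delta>] \<delta>0 \<delta>1 by simp
          qed
          moreover have "\<forall>b\<in>Basis. z \<bullet> b \<in> \<int>" using zb by simp
          ultimately have zZ: "z \<in> Z" unfolding Z_def by blast
          obtain l where l: "l \<in> P" "p \<in> KS h z l" using cube_cover[OF h(1) pcube] unfolding P_def by blast
          have "(z, l) \<in> T" unfolding T_def using zZ l by simp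
          then obtain i where i: "i \<in> {1..m}" "g i = (z, l)" using g unfolding bij_betw_def by force
          show "p \<in> (\<Union>i\<in>{1..m}. \<Delta> i)" using i l unfolding \<Delta>_def by force
        qed
      qed
      show "(\<Union>i\<in>{1..m}. \<Delta> i) \<subseteq> \<Omega>" using \<Delta>O by blast
      show "\<forall>i\<in>{1..m}. \<exists>(v::'a) (b::real). \<forall>x\<in>\<Delta> i. f x = v \<bullet> x + b"
      proof
        fix i assume i: "i \<in> {1..m}"
        obtain v c where "\<forall>x\<in>cbox (h *\<^sub>R fst (g i)) (h *\<^sub>R (fst (g i) + One)). fk h x = v \<bullet> x + c"
          using fk_affine[OF h(1), of "fst (g i)"] gZ[OF i] unfolding Z_def by blast
        thus "\<exists>(v::'a) (b::real). \<forall>x\<in>\<Delta> i. f x = v \<bullet> x + b" using \<Delta>cube[OF i] unfolding f_def by blast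
      qed
      show "\<forall>x\<in>\<Omega>. \<bar>(norm x)\<^sup>2 - f x\<bar> \<le> C * real k powr (-2 / real DIM('a))"
      proof
        fix x assume "x \<in> \<Omega>"
        have "\<bar>(norm x)\<^sup>2 - f x\<bar> \<le> d * (h\<^sup>2 / 4)"
          using fk_err[OF h(1), of x] unfolding f_def d_def D_def by (simp add: abs_le_iff)
        also have "\<dots> \<le> d * (1 / s)\<^sup>2"
        proof -
          have "h\<^sup>2 \<le> (1 / s)\<^sup>2" using h(1,4) by (intro power_mono) auto
          hence "h\<^sup>2 / 4 \<le> (1 / s)\<^sup>2" using zero_le_power2[of "1 / s"] by linarith
          thus ?thesis using d1 by (intro mult_left_mono) auto
        qed
        also have "\<dots> \<le> C * (1 / s)\<^sup>2" using C6(2) d1 by (intro mult_right_mono) auto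
        finally show "\<bar>(norm x)\<^sup>2 - f x\<bar> \<le> C * real k powr (-2 / real DIM('a))" unfolding km2 .
      qed
      show "convex_lip_bdd C \<Omega> f"
        unfolding convex_lip_bdd_def
      proof (intro conjI ballI)
        show "convex_on \<Omega> f" unfolding f_def by (rule fk_convex[OF cvx h(1)])
        have L: "(5 * DIM('a))-lipschitz_on (cball (0::'a) 1) (fk h)" by (rule fk_lip[OF h(1,2)])
        have M: "real (5 * DIM('a)) \<le> C" using C6(2) unfolding d_def D_def by simp
        show "C-lipschitz_on \<Omega> f" unfolding f_def using lipschitz_on_mono[OF L Ob M] .
        fix x assume "x \<in> \<Omega>"
        hence "norm x \<le> 1" using Ob by auto
        hence "\<bar>fk h x\<bar> \<le> 1 + DIM('a)" by (rule fk_bound[OF h(1,2)])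
        thus "\<bar>f x\<bar> \<le> C" using C6(2) d1 unfolding f_def d_def D_def by linarith
      qed
    qed
  qed
qed

end
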